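(* For every integer $k \geq 6$, there exists a stringent graph on $k$ vertices.
   Context: All graphs are finite and simple; $N(u)$ denotes the set of neighbours of a vertex $u$. A set $W\subseteq V(H)$ is homogeneous in $H$ if $N(u)\setminus W=N(v)\setminus W$ for every two distinct vertices $u,v\in W$. A graph $H$ is stringent if it contains no homogeneous set $W$ with $1<|W|\le|V(H)|-1$ and has no non-trivial automorphisms. *)

theory Defs
  imports Main
begin

definition simple_graph :: "'a set \<Rightarrow> ('a \<Rightarrow> 'a \<Rightarrow> bool) \<Rightarrow> bool" where
  "simple_graph V E \<longleftrightarrow> finite V \<and> (\<forall>u v. E u v \<longrightarrow> u \<in> V \<and> v \<in> V)
     \<and> (\<forall>u v. E u v \<longrightarrow> E v u) \<and> (\<forall>u. \<not> E u u)"

definition nbhd :: "'a set \<Rightarrow> ('a \<Rightarrow> 'a \<Rightarrow> bool) \<Rightarrow> 'a \<Rightarrow> 'a set" where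
  "nbhd V E u = {v \<in> V. E u v}"

definition homogeneous :: "'a set \<Rightarrow> ('a \<Rightarrow> 'a \<Rightarrow> bool) \<Rightarrow> 'a set \<Rightarrow> bool" where
  "homogeneous V E W \<longleftrightarrow> W \<subseteq> V \<and>
     (\<forall>u\<in>W. \<forall>v\<in>W. u \<noteq> v \<longrightarrow> nbhd V E u - W = nbhd V E v - W)"

definition automorphism :: "'a set \<Rightarrow> ('a \<Rightarrow> 'a \<Rightarrow> bool) \<Rightarrow> ('a \<Rightarrow> 'a) \<Rightarrow> bool" where
  "automorphism V E f \<longleftrightarrow> bij_betw f V V \<and>
     (\<forall>u\<in>V. \<forall>v\<in>V. E (f u) (f v) \<longleftrightarrow> E u v)"

definition stringent :: "'a set \<Rightarrow> ('a \<Rightarrow> 'a \<Rightarrow> bool) \<Rightarrow> bool" where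
  "stringent V E \<longleftrightarrow>
     (\<nexists>W. homogeneous V E W \<and> 1 < card W \<and> card W \<le> card V - 1) \<and>
     (\<forall>f. automorphism V E f \<longrightarrow> (\<forall>v\<in>V. f v = v))"

end

theory Submission
  imports Defs
begin

definition EE :: "nat \<Rightarrow> nat \<Rightarrow> nat \<Rightarrow> bool" where
  "EE n u v \<longleftrightarrow> u < n \<and> v < n \<and> (u = Suc v \<or> v = Suc u \<or> (u = 1 \<and> v = 3) \<or> (u = 3 \<and> v = 1))"

lemma deg_inv:
  assumes "automorphism V E f" "u \<in> V"
  shows "card (nbhd V E (f u)) = card (nbhd V E u)"
proof -
  have bij: "bij_betw f V V" and adj: "\<forall>u\<in>V. \<forall>v\<in>V. E (f u) (f v) \<longleftrightarrow> E u v"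
    using assms(1) by (auto simp: automorphism_def)
  have "f ` nbhd V E u = nbhd V E (f u)"
  proof
    show "f ` nbhd V E u \<subseteq> nbhd V E (f u)" using adj assms(2) bij_betwE[OF bij]
      by (auto simp: nbhd_def)
    show "nbhd V E (f u) \<subseteq> f ` nbhd V E u"
    proof
      fix w assume w: "w \<in> nbhd V E (f u)"
      then have wV: "w \<in> V" and ew: "E (f u) w" by (auto simp: nbhd_def)
      then obtain v where v: "v \<in> V" "w = f v" using bij by (metis bij_betw_imp_surj_on imageE)
      then show "w \<in> f ` nbhd V E u" using ew adj assms(2) by (auto simp: nbhd_def)
    qed
  qed
  moreover have "nbhd V E u \<subseteq> V" by (auto simp: nbhd_def)
  then have "inj_on f (nbhd V E u)" using bij by (auto simp: bij_betw_def intro: inj_on_subset)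
  ultimately show ?thesis by (metis card_image)
qed

lemma asym:
  assumes n: "n \<ge> 6" and aut: "automorphism {..<n} (EE n) f"
  shows "\<forall>v\<in>{..<n}. f v = v"
proof -
  let ?V = "{..<n::nat}" and ?E = "EE n"
  have bij: "bij_betw f ?V ?V" and adj: "\<forall>u\<in>?V. \<forall>v\<in>?V. ?E (f u) (f v) \<longleftrightarrow> ?E u v"
    using aut by (auto simp: automorphism_def)
  have inj: "inj_on f ?V" using bij by (simp add: bij_betw_def)
  have fV: "\<And>v. v < n \<Longrightarrow> f v < n" using bij_betwE[OF bij] by auto
  have deg: "\<And>u. u < n \<Longrightarrow> card (nbhd ?V ?E (f u)) = card (nbhd ?V ?E u)"
    using deg_inv[OF aut] by auto
  have nb0: "nbhd ?V ?E 0 = {1}" using n by (auto simp: nbhd_def EE_def)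
  have nb1: "nbhd ?V ?E 1 = {0,2,3}" using n by (auto simp: nbhd_def EE_def)
  have nb2: "nbhd ?V ?E 2 = {1,3}" using n by (auto simp: nbhd_def EE_def)
  have nb3: "nbhd ?V ?E 3 = {1,2,4}" using n by (auto simp: nbhd_def EE_def)
  have nbl: "nbhd ?V ?E (n-1) = {n-2}" using n by (auto simp: nbhd_def EE_def)
  have nbl2: "nbhd ?V ?E (n-2) = {n-3,n-1}" using n by (auto simp: nbhd_def EE_def)
  have d0: "card (nbhd ?V ?E 0) = 1" using nb0 by simp
  have d1: "card (nbhd ?V ?E 1) = 3" using nb1 by simp
  have d2: "card (nbhd ?V ?E 2) = 2" using nb2 by simp
  have d3: "card (nbhd ?V ?E 3) = 3" using nb3 by simp
  have dn2: "card (nbhd ?V ?E (n-2)) = 2" using nbl2 n by simp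
  have dge: "\<And>j. 0 < j \<Longrightarrow> j < n - 1 \<Longrightarrow> card (nbhd ?V ?E j) \<ge> 2"
  proof -
    fix j :: nat assume j: "0 < j" "j < n - 1"
    have sub: "{j-1, j+1} \<subseteq> nbhd ?V ?E j" using j by (auto simp: nbhd_def EE_def)
    have fin: "finite (nbhd ?V ?E j)" by (rule finite_subset[of _ ?V]) (auto simp: nbhd_def)
    have "card {j-1, j+1} = 2" using j by simp
    then show "card (nbhd ?V ?E j) \<ge> 2" using card_mono[OF fin sub] by simp
  qed
  have f0: "f 0 = 0"
  proof (rule ccontr)
    assume ne: "f 0 \<noteq> 0"
    have c: "card (nbhd ?V ?E (f 0)) = 1" using deg[of 0] d0 n by simp
    have lt: "f 0 < n" using fV n by simp
    have eq: "f 0 = n - 1"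
    proof (rule ccontr)
      assume "f 0 \<noteq> n - 1"
      then have "card (nbhd ?V ?E (f 0)) \<ge> 2" using dge[of "f 0"] ne lt by simp
      then show False using c by simp
    qed
    have "?E (f 0) (f 1)" using adj n by (simp add: EE_def)
    then have "f 1 \<in> nbhd ?V ?E (n-1)" using eq fV[of 1] n by (simp add: nbhd_def)
    then have "f 1 = n - 2" using nbl by simp
    then show False using deg[of 1] d1 dn2 n by simp
  qed
  have f1: "f 1 = 1"
  proof -
    have "?E (f 0) (f 1)" using adj n by (simp add: EE_def)
    then have "f 1 \<in> nbhd ?V ?E 0" using f0 fV[of 1] n by (simp add: nbhd_def)
    then show ?thesis using nb0 by simp
  qed
  have f2: "f 2 = 2"
  proof -
    have "?E (f 1) (f 2)" using adj n by (simp add: EE_def)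
    then have "f 2 \<in> nbhd ?V ?E 1" using f1 fV[of 2] n by (simp add: nbhd_def)
    then have m: "f 2 \<in> {0,2,3}" using nb1 by simp
    have "f 2 \<noteq> 0"
    proof
      assume "f 2 = 0"
      then have "f 2 = f 0" using f0 by simp
      moreover have "(2::nat) \<in> ?V" "(0::nat) \<in> ?V" using n by auto
      ultimately have "(2::nat) = 0" using inj_onD[OF inj] by blast
      then show False by simp
    qed
    moreover have "f 2 \<noteq> 3" using deg[of 2] d2 d3 n by auto
    ultimately show ?thesis using m by auto
  qed
  have step: "\<And>j. 2 \<le> j \<Longrightarrow> j + 1 < n \<Longrightarrow> (\<forall>i\<le>j. f i = i) \<Longrightarrow> f (j+1) = j+1"
  proof -
    fix j assume j: "2 \<le> j" "j + 1 < n" "\<forall>i\<le>j. f i = i"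
    have "?E j (j+1)" using j by (simp add: EE_def)
    then have "?E (f j) (f (j+1))" using adj[rule_format, of j "j+1"] j by simp
    then have e: "?E j (f (j+1))" using j by simp
    have "f (j+1) = j+1 \<or> f (j+1) \<le> j" using e j(1) by (auto simp: EE_def)
    moreover have "\<not> f (j+1) \<le> j"
    proof
      assume le: "f (j+1) \<le> j"
      then have "f (f (j+1)) = f (j+1)" using j(3) by simp
      moreover have "f (j+1) < n" "j + 1 < n" using le j by auto
      ultimately have "f (j+1) = j+1" using inj_onD[OF inj, of "f (j+1)" "j+1"] by simp
      then show False using le by simp
    qed
    ultimately show "f (j+1) = j+1" by simp
  qed
  have all: "\<And>j. j < n \<Longrightarrow> \<forall>i\<le>j. f i = i"
  proof -
    fix j show "j < n \<Longrightarrow> \<forall>i\<le>j. f i = i"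
    proof (induction j)
      case 0 then show ?case using f0 by simp
    next
      case (Suc j)
      then have IH: "\<forall>i\<le>j. f i = i" by simp
      have "f (Suc j) = Suc j"
      proof (cases "j < 2")
        case True
        then have "Suc j = 1 \<or> Suc j = 2" by auto
        then show ?thesis using f1 f2 by (auto simp: numeral_2_eq_2)
      next
        case False
        then show ?thesis using step[of j] IH Suc.prems by simp
      qed
      then show ?case using IH by (auto simp: le_Suc_eq)
    qed
  qed
  show ?thesis
  proof
    fix v assume "v \<in> ?V"
    then show "f v = v" using all[of v] by blast
  qed
qed

lemma dist:
  assumes "homogeneous V E W" "a \<in> W" "b \<in> W" "a \<noteq> b" "x \<in> V" "E a x" "\<not> E b x"
  shows "x \<in> W"
proof (rule ccontr)
  assume nx: "x \<notin> W"
  have eq: "nbhd V E a - W = nbhd V E b - W" using assms(1-4) unfolding homogeneous_def by blast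
  have "x \<in> nbhd V E a - W" using nx assms(5,6) by (simp add: nbhd_def)
  then have "x \<in> nbhd V E b - W" using eq by simp
  then show False using assms(7) by (simp add: nbhd_def)
qed

lemma prime_part:
  assumes n: "n \<ge> 6" and h: "homogeneous {..<n} (EE n) W" and a: "a \<in> W" and b: "b \<in> W" and ab: "a \<noteq> b"
  shows "{..<n} \<subseteq> W"
proof -
  let ?V = "{..<n::nat}" and ?E = "EE n"
  have WV: "W \<subseteq> ?V" using h by (simp add: homogeneous_def)
  note D = dist[OF h]
  have C: "\<exists>i. i \<in> W \<and> Suc i \<in> W \<and> Suc i < n" if uv: "u \<in> W" "v \<in> W" "u < v" for u v
  proof (cases "v = Suc u")
    case True then show ?thesis using uv WV by auto
  next
    case nv: False
    have vn: "v < n" using uv WV by auto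
    show ?thesis
    proof (cases "u = 0")
      case False
      have "u - 1 \<in> W" using D[OF uv(1) uv(2), of "u-1"] uv nv False vn by (auto simp: EE_def)
      then show ?thesis using uv False WV by (intro exI[of _ "u-1"]) auto
    next
      case u0: True
      show ?thesis
      proof (cases "v = 2")
        case True
        have "3 \<in> W" using D[OF uv(2) uv(1), of 3] uv u0 True n by (auto simp: EE_def)
        then show ?thesis using uv True n by (intro exI[of _ 2]) auto
      next
        case n2: False
        show ?thesis
        proof (cases "v = 3")
          case True
          have "4 \<in> W" using D[OF uv(2) uv(1), of 4] uv u0 True n by (auto simp: EE_def)
          then show ?thesis using uv True n by (intro exI[of _ 3]) auto
        next
          case False
          have "1 \<in> W" using D[OF uv(1) uv(2), of 1] uv u0 False n2 nv vn n by (auto simp: EE_def)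
          then show ?thesis using uv u0 n by (intro exI[of _ 0]) auto
        qed
      qed
    qed
  qed
  have A: "i \<in> W \<Longrightarrow> Suc i \<in> W \<Longrightarrow> Suc i < n \<Longrightarrow> 0 \<in> W \<and> 1 \<in> W" for i
  proof (induction i)
    case 0 then show ?case by simp
  next
    case (Suc i)
    show ?case
    proof (cases "i = 1")
      case True
      have w2: "2 \<in> W" and w3: "3 \<in> W" using Suc.prems True by (simp_all add: numeral_eq_Suc)
      have w4: "4 \<in> W" using D[OF w3 w2, of 4] n by (auto simp: EE_def)
      have w1: "1 \<in> W" using D[OF w3 w4, of 1] n by (auto simp: EE_def)
      show ?thesis using Suc.IH True w1 w2 n by (simp add: numeral_eq_Suc)
    next
      case False
      have "i \<in> W" using D[OF Suc.prems(1) Suc.prems(2), of i] Suc.prems False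
        by (auto simp: EE_def)
      then show ?thesis using Suc.IH Suc.prems by simp
    qed
  qed
  have B: "\<forall>j. j < n \<longrightarrow> j \<in> W" if w0: "0 \<in> W" and w1: "1 \<in> W"
  proof (intro allI)
    fix j show "j < n \<longrightarrow> j \<in> W"
    proof (induction j rule: less_induct)
      case (less j)
      show ?case
      proof
        assume jn: "j < n"
        consider "j = 0" | "j = 1" | "j = 2" | "j = 3" | "j \<ge> 4" by linarith
        then show "j \<in> W"
        proof cases
          case 3 then show ?thesis using D[OF w1 w0, of 2] n by (auto simp: EE_def)
        next
          case 4 then show ?thesis using D[OF w1 w0, of 3] n by (auto simp: EE_def)
        next
          case 5
          have x: "j - 1 \<in> W" "j - 2 \<in> W" using less.IH[of "j-1"] less.IH[of "j-2"] jn 5 by auto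
          have e1: "EE n (j-1) j" using jn 5 by (simp add: EE_def)
          have e2: "\<not> EE n (j-2) j" using jn 5 unfolding EE_def by arith
          have ne: "j - 1 \<noteq> j - 2" using 5 by arith
          show ?thesis using D[OF x ne _ e1 e2] jn by simp
        qed (use w0 w1 in auto)
      qed
    qed
  qed
  have "\<exists>i. i \<in> W \<and> Suc i \<in> W \<and> Suc i < n"
  proof (cases "a < b")
    case True then show ?thesis using C a b by blast
  next
    case False then have "b < a" using ab by simp
    then show ?thesis using C a b by blast
  qed
  then obtain i where "i \<in> W" "Suc i \<in> W" "Suc i < n" by blast
  then have "0 \<in> W \<and> 1 \<in> W" by (rule A)
  then have "\<forall>j. j < n \<longrightarrow> j \<in> W" using B by blast
  then show ?thesis by blast
qed

theorem lemma4p2: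
  fixes k :: nat
  assumes "k \<ge> 6"
  shows "\<exists>(V :: nat set) E. simple_graph V E \<and> card V = k \<and> stringent V E"
proof (intro exI conjI)
  show "simple_graph {..<k} (EE k)" by (auto simp: simple_graph_def EE_def)
  show "card {..<k} = k" by simp
  show "stringent {..<k} (EE k)"
    unfolding stringent_def
  proof (intro conjI notI allI impI)
    fix f assume "automorphism {..<k} (EE k) f"
    then show "\<forall>v\<in>{..<k}. f v = v" by (rule asym[OF assms])
  next
    assume "\<exists>W. homogeneous {..<k} (EE k) W \<and> 1 < card W \<and> card W \<le> card {..<k} - 1"
    then obtain W where h: "homogeneous {..<k} (EE k) W" and c1: "1 < card W"
      and c2: "card W \<le> card {..<k} - 1" by blast
    have fin: "finite W" using h finite_subset[of W "{..<k}"] by (auto simp: homogeneous_def)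
    have "\<not> card W \<le> Suc 0" using c1 by simp
    then have "\<not> (\<forall>a\<in>W. \<forall>b\<in>W. a = b)" using card_le_Suc0_iff_eq[OF fin] by simp
    then obtain a b where "a \<in> W" "b \<in> W" "a \<noteq> b" by blast
    then have "{..<k} \<subseteq> W" using prime_part[OF assms h] by blast
    then have "card {..<k} \<le> card W" by (rule card_mono[OF fin])
    then have "k \<le> card W" by simp
    then show False using c2 assms by simp
  qed
qed

end
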